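(* Let $n\in\mathbb{N}$, $y\in\{-1,+1\}^n$, $Y=\operatorname{diag}(y)$, let $K,\tilde K\in\mathbb{R}^{n\times n}$ be symmetric positive semidefinite matrices, $C>0$, $\gamma>0$, and define $F(\alpha)=\frac12\alpha^\top YKY\alpha-\mathbf 1^\top\alpha$ and $\tilde F(\tilde\alpha)=\frac12\tilde\alpha^\top\tilde K\tilde\alpha$. (i) If $(\alpha_1,\tilde\alpha_1)$ and $(\alpha_2,\tilde\alpha_2)$ are solutions of $$\min_{\alpha,\tilde\alpha\in\mathbb{R}^n}F(\alpha)+\tfrac1\gamma\tilde F(\tilde\alpha)\quad\text{s.t. } y^\top\alpha=0,\ \mathbf 1^\top\tilde\alpha=0,\ 0\le\alpha_i\le C+\tilde\alpha_i\ \forall i,$$ then $\alpha_1-\alpha_2\in\operatorname{Null}(YKY)\cap\mathbf 1^\perp\cap y^\perp$ and $\tilde\alpha_1-\tilde\alpha_2\in\operatorname{Null}(\tilde K)\cap\mathbf 1^\perp$. (ii) For $c\in\mathbb{R}^n_{\ge0}$, if $\alpha_1$ and $\alpha_2$ are solutions of $\min_\alpha F(\alpha)$ s.t. $y^\top\alpha=0$, $0\le\alpha_i\le c_i$ for all $i$, then $\alpha_1-\alpha_2\in\operatorname{Null}(YKY)\cap\mathbf 1^\perp\cap y^\perp$.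
   Context: $\mathbf 1$ is the all-ones vector; $v^\perp$ denotes the orthogonal complement of $v$ in $\mathbb{R}^n$. (These are the dual problems of SVM+ and of the weighted SVM, with $K$ and $\tilde K$ the kernel matrices of the decision and correcting features.) *)

theory Defs
  imports "HOL-Analysis.Analysis"
begin

definition diag_mat :: "real ^ 'n \<Rightarrow> real ^ 'n ^ 'n" where
  "diag_mat y = (\<chi> i j. if i = j then y $ i else 0)"

definition psd :: "real ^ 'n ^ 'n \<Rightarrow> bool" where
  "psd M \<longleftrightarrow> (\<forall>x. 0 \<le> x \<bullet> (M *v x))"

definition null_space :: "real ^ 'n ^ 'n \<Rightarrow> (real ^ 'n) set" where
  "null_space M = {v. M *v v = 0}"

definition orth_compl :: "real ^ 'n \<Rightarrow> (real ^ 'n) set" where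
  "orth_compl v = {w. v \<bullet> w = 0}"

definition svmF :: "real ^ 'n \<Rightarrow> real ^ 'n ^ 'n \<Rightarrow> real ^ 'n \<Rightarrow> real" where
  "svmF y K a = (1/2) * (a \<bullet> ((diag_mat y ** K ** diag_mat y) *v a)) - 1 \<bullet> a"

definition svmFt :: "real ^ 'n ^ 'n \<Rightarrow> real ^ 'n \<Rightarrow> real" where
  "svmFt Kt ta = (1/2) * (ta \<bullet> (Kt *v ta))"

definition svmplus_feasible :: "real ^ 'n \<Rightarrow> real \<Rightarrow> real ^ 'n \<Rightarrow> real ^ 'n \<Rightarrow> bool" where
  "svmplus_feasible y C a ta \<longleftrightarrow> y \<bullet> a = 0 \<and> 1 \<bullet> ta = 0 \<and>
     (\<forall>i. 0 \<le> a $ i \<and> a $ i \<le> C + ta $ i)"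

definition svmplus_solution ::
  "real ^ 'n \<Rightarrow> real ^ 'n ^ 'n \<Rightarrow> real ^ 'n ^ 'n \<Rightarrow> real \<Rightarrow> real \<Rightarrow> real ^ 'n \<Rightarrow> real ^ 'n \<Rightarrow> bool" where
  "svmplus_solution y K Kt C \<gamma> a ta \<longleftrightarrow> svmplus_feasible y C a ta \<and>
     (\<forall>b tb. svmplus_feasible y C b tb \<longrightarrow>
        svmF y K a + (1/\<gamma>) * svmFt Kt ta \<le> svmF y K b + (1/\<gamma>) * svmFt Kt tb)"

definition wsvm_feasible :: "real ^ 'n \<Rightarrow> real ^ 'n \<Rightarrow> real ^ 'n \<Rightarrow> bool" where
  "wsvm_feasible y c a \<longleftrightarrow> y \<bullet> a = 0 \<and> (\<forall>i. 0 \<le> a $ i \<and> a $ i \<le> c $ i)"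

definition wsvm_solution :: "real ^ 'n \<Rightarrow> real ^ 'n ^ 'n \<Rightarrow> real ^ 'n \<Rightarrow> real ^ 'n \<Rightarrow> bool" where
  "wsvm_solution y K c a \<longleftrightarrow> wsvm_feasible y c a \<and>
     (\<forall>b. wsvm_feasible y c b \<longrightarrow> svmF y K a \<le> svmF y K b)"

end

theory Submission
  imports Defs
begin

lemma sym_dot:
  fixes M :: "real ^ 'n ^ 'n"
  assumes "transpose M = M"
  shows "x \<bullet> (M *v z) = z \<bullet> (M *v x)"
proof -
  have "x \<bullet> (M *v z) = (x v* M) \<bullet> z" by (simp add: dot_lmul_matrix)
  also have "\<dots> = (x v* transpose M) \<bullet> z" using assms by simp
  also have "\<dots> = z \<bullet> (M *v x)" by (simp add: vector_transpose_matrix inner_commute)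
  finally show ?thesis .
qed

lemma Q_add:
  fixes M :: "real ^ 'n ^ 'n"
  assumes "transpose M = M"
  shows "(a + b) \<bullet> (M *v (a + b)) = a \<bullet> (M *v a) + 2 * (b \<bullet> (M *v a)) + b \<bullet> (M *v b)"
  using sym_dot[OF assms, of a b]
  by (simp add: matrix_vector_right_distrib inner_add_left inner_add_right)

lemma Q_scale:
  fixes M :: "real ^ 'n ^ 'n"
  shows "(t *\<^sub>R a) \<bullet> (M *v (t *\<^sub>R a)) = t^2 * (a \<bullet> (M *v a))"
  by (simp add: matrix_vector_mult_scaleR power2_eq_square)

lemma Q_cross_scale:
  fixes M :: "real ^ 'n ^ 'n"
  shows "(t *\<^sub>R a) \<bullet> (M *v b) = t * (a \<bullet> (M *v b))"
        "a \<bullet> (M *v (t *\<^sub>R b)) = t * (a \<bullet> (M *v b))"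
  by (simp_all add: matrix_vector_mult_scaleR)

lemma psd_zero:
  fixes M :: "real ^ 'n ^ 'n"
  assumes sym: "transpose M = M" and p: "psd M" and q: "x \<bullet> (M *v x) = 0"
  shows "M *v x = 0"
proof -
  define z where "z = M *v x"
  define r where "r = z \<bullet> (M *v z)"
  define pp where "pp = z \<bullet> z"
  have r0: "r \<ge> 0" using p unfolding psd_def r_def by simp
  have key: "0 \<le> 2 * t * pp + t^2 * r" for t
  proof -
    have "0 \<le> (x + t *\<^sub>R z) \<bullet> (M *v (x + t *\<^sub>R z))" using p unfolding psd_def by simp
    also have "\<dots> = x \<bullet> (M *v x) + 2 * ((t *\<^sub>R z) \<bullet> (M *v x)) + (t *\<^sub>R z) \<bullet> (M *v (t *\<^sub>R z))"
      by (rule Q_add[OF sym])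
    also have "\<dots> = 2 * t * pp + t^2 * r"
      using q by (simp add: Q_scale Q_cross_scale z_def pp_def r_def power2_eq_square)
    finally show ?thesis .
  qed
  have "pp = 0"
  proof (rule ccontr)
    assume "pp \<noteq> 0"
    then have pp0: "pp > 0" unfolding pp_def by simp
    define t where "t = - pp / (r + 1)"
    have "0 \<le> 2 * t * pp + t^2 * r" by (rule key)
    moreover have "2 * t * pp + t^2 * r < 0"
    proof -
      have r1: "r + 1 > 0" using r0 by simp
      have tt: "t * (r + 1) = - pp" unfolding t_def using r1 by simp
      have "t^2 * r \<le> t^2 * (r + 1)" by (simp add: mult_left_mono)
      also have "\<dots> = - t * pp" using tt by (simp add: power2_eq_square algebra_simps)
      finally have "2 * t * pp + t^2 * r \<le> t * pp" by linarith
      also have "t * pp < 0" unfolding t_def using pp0 r1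
        by (simp add: mult_neg_pos divide_pos_pos)
      finally show ?thesis .
    qed
    ultimately show False by simp
  qed
  then show ?thesis unfolding pp_def z_def by simp
qed

lemma Q_mid:
  fixes M :: "real ^ 'n ^ 'n"
  assumes sym: "transpose M = M"
  shows "((1/2) *\<^sub>R (a + b)) \<bullet> (M *v ((1/2) *\<^sub>R (a + b))) =
     (a \<bullet> (M *v a) + b \<bullet> (M *v b)) / 2 - ((a - b) \<bullet> (M *v (a - b))) / 4"
proof -
  have "(a - b) = a + (-1) *\<^sub>R b" by simp
  then have d: "(a - b) \<bullet> (M *v (a - b)) = a \<bullet> (M *v a) - 2 * (b \<bullet> (M *v a)) + b \<bullet> (M *v b)"
    using Q_add[OF sym, of a "(-1) *\<^sub>R b"] Q_scale[of "-1" b M] Q_cross_scale(1)[of "-1" b M a] by simp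
  have h: "((1/2) *\<^sub>R (a + b)) \<bullet> (M *v ((1/2) *\<^sub>R (a + b))) = (1/2)^2 * ((a + b) \<bullet> (M *v (a + b)))"
    by (rule Q_scale)
  show ?thesis unfolding h Q_add[OF sym, of a b] d by (simp add: power2_eq_square field_simps)
qed

lemma diag_sym: "transpose (diag_mat y) = diag_mat y"
  unfolding diag_mat_def transpose_def by (simp add: vec_eq_iff)

lemma YKY_sym:
  assumes "transpose K = K"
  shows "transpose (diag_mat y ** K ** diag_mat y) = diag_mat y ** K ** diag_mat y"
proof -
  have "transpose (diag_mat y ** K ** diag_mat y) = transpose (diag_mat y) ** (transpose K ** transpose (diag_mat y))"
    by (simp only: matrix_transpose_mul)
  also have "\<dots> = diag_mat y ** (K ** diag_mat y)" by (simp only: diag_sym assms)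
  finally show ?thesis by (simp only: matrix_mul_assoc)
qed

lemma sym_dot_gen:
  fixes M :: "real ^ 'n ^ 'n"
  assumes "transpose M = M"
  shows "x \<bullet> (M *v z) = (M *v x) \<bullet> z"
  by (metis assms dot_lmul_matrix vector_transpose_matrix)

lemma YKY_psd:
  fixes K :: "real ^ 'n ^ 'n"
  assumes "psd K"
  shows "psd (diag_mat y ** K ** diag_mat y)"
  unfolding psd_def
proof
  fix x :: "real ^ 'n"
  have "x \<bullet> ((diag_mat y ** K ** diag_mat y) *v x) = x \<bullet> (diag_mat y *v (K *v (diag_mat y *v x)))"
    by (metis matrix_vector_mul_assoc)
  also have "\<dots> = (diag_mat y *v x) \<bullet> (K *v (diag_mat y *v x))"
    by (metis sym_dot_gen diag_sym)
  finally show "0 \<le> x \<bullet> ((diag_mat y ** K ** diag_mat y) *v x)"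
    using assms unfolding psd_def by simp
qed

lemma psd_nonneg: "psd M \<Longrightarrow> 0 \<le> x \<bullet> (M *v x)"
  unfolding psd_def by simp

lemma aux_lin: "(g::real) \<le> m \<Longrightarrow> m = (g + g2) / 2 - q / 8 - w / 8 \<Longrightarrow> g = g2 \<Longrightarrow> 0 \<le> q \<Longrightarrow> 0 \<le> w \<Longrightarrow> q = 0 \<and> w = 0"
  by (simp add: field_simps)

lemma aux_lin1: "(g::real) \<le> m \<Longrightarrow> m = (g + g2) / 2 - q / 8 \<Longrightarrow> g = g2 \<Longrightarrow> 0 \<le> q \<Longrightarrow> q = 0"
  by (simp add: field_simps)

abbreviation QQ :: "real ^ 'n ^ 'n \<Rightarrow> real ^ 'n \<Rightarrow> real" where
  "QQ M x \<equiv> x \<bullet> (M *v x)"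

lemma F_mid:
  assumes "transpose K = K"
  shows "svmF y K ((1/2) *\<^sub>R (a + b)) = (svmF y K a + svmF y K b) / 2
          - QQ (diag_mat y ** K ** diag_mat y) (a - b) / 8"
  unfolding svmF_def Q_mid[OF YKY_sym[OF assms]]
  by (simp add: inner_add_right field_simps)

lemma Ft_mid:
  assumes "transpose Kt = Kt"
  shows "svmFt Kt ((1/2) *\<^sub>R (a + b)) = (svmFt Kt a + svmFt Kt b) / 2 - QQ Kt (a - b) / 8"
  unfolding svmFt_def Q_mid[OF assms] by (simp add: field_simps)

lemma Q_eq:
  fixes M :: "real ^ 'n ^ 'n"
  assumes sym: "transpose M = M" and z: "M *v (a - b) = 0"
  shows "QQ M a = QQ M b"
proof -
  have "a = b + (a - b)" by simp
  then have "QQ M a = QQ M b + 2 * ((a - b) \<bullet> (M *v b)) + QQ M (a - b)"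
    by (metis Q_add[OF sym])
  moreover have "(a - b) \<bullet> (M *v b) = 0" using sym_dot[OF sym, of "a - b" b] z by simp
  ultimately show ?thesis using z by simp
qed

lemma half_comp: "((1/2) *\<^sub>R (a + b)) $ i = (a $ i + b $ i) / (2::real)"
  by simp

lemma half_inner: "v \<bullet> ((1/2) *\<^sub>R (a + b)) = (v \<bullet> a + v \<bullet> b) / 2"
  by (simp add: inner_add_right)

theorem proposition3:
  fixes y :: "real ^ 'n" and K Kt :: "real ^ 'n ^ 'n" and C \<gamma> :: real
  assumes y_pm: "\<forall>i. y $ i = 1 \<or> y $ i = -1"
    and K_sym: "transpose K = K" and K_psd: "psd K"
    and Kt_sym: "transpose Kt = Kt" and Kt_psd: "psd Kt"
    and C_pos: "C > 0" and gamma_pos: "\<gamma> > 0"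
  shows "(\<forall>a1 ta1 a2 ta2.
            svmplus_solution y K Kt C \<gamma> a1 ta1 \<and> svmplus_solution y K Kt C \<gamma> a2 ta2 \<longrightarrow>
            a1 - a2 \<in> null_space (diag_mat y ** K ** diag_mat y) \<inter> orth_compl 1 \<inter> orth_compl y \<and>
            ta1 - ta2 \<in> null_space Kt \<inter> orth_compl 1)
       \<and> (\<forall>c a1 a2. (\<forall>i. 0 \<le> c $ i) \<and> wsvm_solution y K c a1 \<and> wsvm_solution y K c a2 \<longrightarrow>
            a1 - a2 \<in> null_space (diag_mat y ** K ** diag_mat y) \<inter> orth_compl 1 \<inter> orth_compl y)"
proof (rule conjI; intro allI impI)
  let ?M = "diag_mat y ** K ** diag_mat y"
  have Msym: "transpose ?M = ?M" by (rule YKY_sym[OF K_sym])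
  have Mpsd: "psd ?M" by (rule YKY_psd[OF K_psd])
  {
    fix a1 ta1 a2 ta2
    assume h: "svmplus_solution y K Kt C \<gamma> a1 ta1 \<and> svmplus_solution y K Kt C \<gamma> a2 ta2"
    define G where "G = (\<lambda>a ta. svmF y K a + (1/\<gamma>) * svmFt Kt ta)"
    have f1: "svmplus_feasible y C a1 ta1" and f2: "svmplus_feasible y C a2 ta2"
      using h unfolding svmplus_solution_def by auto
    have o1: "\<And>b tb. svmplus_feasible y C b tb \<Longrightarrow> G a1 ta1 \<le> G b tb"
      using h unfolding svmplus_solution_def G_def by auto
    have o2: "\<And>b tb. svmplus_feasible y C b tb \<Longrightarrow> G a2 ta2 \<le> G b tb"
      using h unfolding svmplus_solution_def G_def by auto
    have eqG: "G a1 ta1 = G a2 ta2" using o1[OF f2] o2[OF f1] by simp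
    define m where "m = (1/2) *\<^sub>R (a1 + a2)"
    define tm where "tm = (1/2) *\<^sub>R (ta1 + ta2)"
    have fm: "svmplus_feasible y C m tm"
      unfolding svmplus_feasible_def m_def tm_def half_inner half_comp
    proof (intro conjI allI)
      fix i
      have "0 \<le> a1 $ i" "a1 $ i \<le> C + ta1 $ i" "0 \<le> a2 $ i" "a2 $ i \<le> C + ta2 $ i"
        using f1 f2 unfolding svmplus_feasible_def by auto
      then show "0 \<le> (a1 $ i + a2 $ i) / 2" "(a1 $ i + a2 $ i) / 2 \<le> C + (ta1 $ i + ta2 $ i) / 2"
        by (auto simp: field_simps)
    qed (use f1 f2 in \<open>auto simp: svmplus_feasible_def\<close>)
    have le: "G a1 ta1 \<le> G m tm" by (rule o1[OF fm])
    have Gm: "G m tm = (G a1 ta1 + G a2 ta2) / 2 - QQ ?M (a1 - a2) / 8 - (1/\<gamma>) * QQ Kt (ta1 - ta2) / 8"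
      unfolding G_def m_def tm_def F_mid[OF K_sym] Ft_mid[OF Kt_sym] using gamma_pos by (simp add: field_simps)
    have q1: "QQ ?M (a1 - a2) \<ge> 0" using Mpsd by (rule psd_nonneg)
    have q2: "QQ Kt (ta1 - ta2) \<ge> 0" using Kt_psd by (rule psd_nonneg)
    have q2': "(1/\<gamma>) * QQ Kt (ta1 - ta2) \<ge> 0" using q2 gamma_pos by simp
    have z1: "QQ ?M (a1 - a2) = 0" using aux_lin[OF le Gm eqG q1 q2'] by simp
    have z2': "(1/\<gamma>) * QQ Kt (ta1 - ta2) = 0" using aux_lin[OF le Gm eqG q1 q2'] by simp
    have z2: "QQ Kt (ta1 - ta2) = 0" using z2' gamma_pos by simp
    have n1: "?M *v (a1 - a2) = 0" by (rule psd_zero[OF Msym Mpsd z1])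
    have n2: "Kt *v (ta1 - ta2) = 0" by (rule psd_zero[OF Kt_sym Kt_psd z2])
    have e1: "QQ ?M a1 = QQ ?M a2" by (rule Q_eq[OF Msym n1])
    have e2: "QQ Kt ta1 = QQ Kt ta2" by (rule Q_eq[OF Kt_sym n2])
    have "1 \<bullet> a1 = 1 \<bullet> a2" using eqG e1 e2 unfolding G_def svmF_def svmFt_def by simp
    then have o: "1 \<bullet> (a1 - a2) = 0" by (simp add: inner_diff_right)
    have y0: "y \<bullet> (a1 - a2) = 0" using f1 f2 unfolding svmplus_feasible_def by (simp add: inner_diff_right)
    have t0: "1 \<bullet> (ta1 - ta2) = 0" using f1 f2 unfolding svmplus_feasible_def by (simp add: inner_diff_right)
    show "a1 - a2 \<in> null_space ?M \<inter> orth_compl 1 \<inter> orth_compl y \<and>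
            ta1 - ta2 \<in> null_space Kt \<inter> orth_compl 1"
      using n1 n2 o y0 t0 unfolding null_space_def orth_compl_def by simp
  }
  {
    fix c a1 a2
    assume h: "(\<forall>i. 0 \<le> c $ i) \<and> wsvm_solution y K c a1 \<and> wsvm_solution y K c a2"
    have f1: "wsvm_feasible y c a1" and f2: "wsvm_feasible y c a2"
      using h unfolding wsvm_solution_def by auto
    have o1: "\<And>b. wsvm_feasible y c b \<Longrightarrow> svmF y K a1 \<le> svmF y K b"
      using h unfolding wsvm_solution_def by auto
    have o2: "\<And>b. wsvm_feasible y c b \<Longrightarrow> svmF y K a2 \<le> svmF y K b"
      using h unfolding wsvm_solution_def by auto
    have eqG: "svmF y K a1 = svmF y K a2" using o1[OF f2] o2[OF f1] by simp
    define m where "m = (1/2) *\<^sub>R (a1 + a2)"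
    have fm: "wsvm_feasible y c m"
      unfolding wsvm_feasible_def m_def half_inner half_comp
    proof (intro conjI allI)
      fix i
      have "0 \<le> a1 $ i" "a1 $ i \<le> c $ i" "0 \<le> a2 $ i" "a2 $ i \<le> c $ i"
        using f1 f2 unfolding wsvm_feasible_def by auto
      then show "0 \<le> (a1 $ i + a2 $ i) / 2" "(a1 $ i + a2 $ i) / 2 \<le> c $ i"
        by auto
    qed (use f1 f2 in \<open>auto simp: wsvm_feasible_def\<close>)
    have le: "svmF y K a1 \<le> svmF y K m" by (rule o1[OF fm])
    have Gm: "svmF y K m = (svmF y K a1 + svmF y K a2) / 2 - QQ ?M (a1 - a2) / 8"
      unfolding m_def by (rule F_mid[OF K_sym])
    have q1: "QQ ?M (a1 - a2) \<ge> 0" using Mpsd by (rule psd_nonneg)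
    have z1: "QQ ?M (a1 - a2) = 0" using aux_lin1[OF le Gm eqG q1] .
    have n1: "?M *v (a1 - a2) = 0" by (rule psd_zero[OF Msym Mpsd z1])
    have e1: "QQ ?M a1 = QQ ?M a2" by (rule Q_eq[OF Msym n1])
    have "1 \<bullet> a1 = 1 \<bullet> a2" using eqG e1 unfolding svmF_def by simp
    then have o: "1 \<bullet> (a1 - a2) = 0" by (simp add: inner_diff_right)
    have y0: "y \<bullet> (a1 - a2) = 0" using f1 f2 unfolding wsvm_feasible_def by (simp add: inner_diff_right)
    show "a1 - a2 \<in> null_space ?M \<inter> orth_compl 1 \<inter> orth_compl y"
      using n1 o y0 unfolding null_space_def orth_compl_def by simp
  }
qed

end
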